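(* Let $\varphi=\frac{1+\sqrt5}{2}$. For a complex number $y$ and $n\ge1$ define $$\Big(1+\frac{y}{\varphi^n}\Big)_F^n=\prod_{k=0}^{n-1}\Big(1+(-1)^k\varphi^{\,n-1-2k}\frac{y}{\varphi^n}\Big).$$ For $q=-\varphi^2$ let $[k]_q=\frac{q^k-1}{q-1}$, $[0]_q!=1$, $[k]_q!=[1]_q[2]_q\cdots[k]_q$, and $e_q(z)=\sum_{k=0}^\infty\frac{z^k}{[k]_q!}$ (Jackson $q$-exponential). Then for every $y$, $$\lim_{n\to\infty}\Big(1+\frac{y}{\varphi^n}\Big)_F^n=e_{-\varphi^2}\Big(\frac{y}{\sqrt5}\Big).$$ *)

theory Defs
  imports "HOL-Analysis.Analysis"
begin

definition golden :: real where "golden = (1 + sqrt 5) / 2"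

definition fib_power :: "complex \<Rightarrow> nat \<Rightarrow> complex" where
  "fib_power y n = (\<Prod>k<n. 1 + (-1)^k * complex_of_real (golden powi (int n - 1 - 2 * int k))
                              * (y / complex_of_real (golden ^ n)))"

definition q_number :: "real \<Rightarrow> nat \<Rightarrow> real" where
  "q_number q k = (q ^ k - 1) / (q - 1)"

definition q_factorial :: "real \<Rightarrow> nat \<Rightarrow> real" where
  "q_factorial q k = (\<Prod>j\<in>{1..k}. q_number q j)"

definition jackson_exp :: "real \<Rightarrow> complex \<Rightarrow> complex" where
  "jackson_exp q z = (\<Sum>k. z ^ k / complex_of_real (q_factorial q k))"

end

theory Submission
  imports Defs
begin

lemma golden_pos: "golden > 1"
proof -
  have "sqrt 5 > 1" by (simp add: real_less_rsqrt)
  thus ?thesis unfolding golden_def by simp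
qed

lemma golden_sq: "golden^2 = golden + 1"
  unfolding golden_def by (simp add: power2_eq_square field_simps)

lemma sqrt5_golden: "sqrt 5 = 2 * golden - 1"
  unfolding golden_def by (simp add: field_simps)

definition tt :: real where "tt = - 1 / golden^2"

lemma abs_tt: "\<bar>tt\<bar> < 1" "\<bar>tt\<bar> = 1 / golden^2"
proof -
  show "\<bar>tt\<bar> = 1 / golden^2" using golden_pos by (simp add: tt_def)
  moreover have "golden^2 > 1" using golden_pos by (simp add: one_less_power)
  ultimately show "\<bar>tt\<bar> < 1" by (simp add: divide_less_eq)
qed

lemma tt_pow_ne1: "tt ^ Suc m \<noteq> 1"
proof
  assume "tt ^ Suc m = 1"
  hence "\<bar>tt\<bar> ^ Suc m = 1" by (metis power_abs abs_one)
  moreover have "\<bar>tt\<bar> ^ Suc m < 1" using abs_tt(1) by (metis abs_ge_zero power_less_one_iff zero_less_Suc)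
  ultimately show False by simp
qed

fun hc :: "nat \<Rightarrow> real" where
  "hc 0 = 1"
| "hc (Suc m) = hc m * tt^m / (golden * (1 - tt^Suc m))"

lemma hc_rec: "hc (Suc m) * (1 - tt^Suc m) = hc m * tt^m / golden"
  using tt_pow_ne1[of m] golden_pos by (simp add: field_simps)

lemma hc_bound: "\<bar>hc (Suc m)\<bar> \<le> \<bar>hc m\<bar> * (\<bar>tt\<bar>^m / (golden * (1 - \<bar>tt\<bar>)))"
proof -
  have a: "\<bar>tt\<bar>^Suc m \<le> \<bar>tt\<bar>" using abs_tt(1)
    by (metis abs_ge_zero less_imp_le power_Suc power_le_one mult_left_le)
  have "\<bar>1 - tt^Suc m\<bar> \<ge> 1 - \<bar>tt\<bar>^Suc m"
    by (metis abs_triangle_ineq2 abs_one power_abs diff_le_eq abs_ge_zero order_trans add_le_cancel_left)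
  hence b: "\<bar>1 - tt^Suc m\<bar> \<ge> 1 - \<bar>tt\<bar>" using a by linarith
  have c: "1 - \<bar>tt\<bar> > 0" using abs_tt(1) by simp
  have "\<bar>hc (Suc m)\<bar> = \<bar>hc m\<bar> * \<bar>tt\<bar>^m / (golden * \<bar>1 - tt^Suc m\<bar>)"
    using golden_pos by (simp add: abs_mult abs_divide power_abs)
  also have "\<dots> \<le> \<bar>hc m\<bar> * \<bar>tt\<bar>^m / (golden * (1 - \<bar>tt\<bar>))"
    apply (rule divide_left_mono)
    using b c golden_pos by (auto intro: mult_left_mono)
  finally show ?thesis by simp
qed

lemma G_summable: "summable (\<lambda>m. complex_of_real (hc m) * w^m)"
proof -
  define K where "K = norm w / (golden * (1 - \<bar>tt\<bar>))"
  have "(\<lambda>m. \<bar>tt\<bar>^m) \<longlonglongrightarrow> 0" using abs_tt(1) by (simp add: LIMSEQ_power_zero)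
  hence "(\<lambda>m. \<bar>tt\<bar>^m * K) \<longlonglongrightarrow> 0 * K" by (intro tendsto_mult) auto
  hence "eventually (\<lambda>m. \<bar>tt\<bar>^m * K < 1/2) sequentially"
    by (intro order_tendstoD) auto
  then obtain N where N: "\<And>m. m \<ge> N \<Longrightarrow> \<bar>tt\<bar>^m * K < 1/2"
    unfolding eventually_sequentially by blast
  show ?thesis
  proof (rule summable_ratio_test[of "1/2" N])
    fix m assume "m \<ge> N"
    have K0: "K \<ge> 0" unfolding K_def using abs_tt(1) golden_pos by simp
    have "norm (complex_of_real (hc (Suc m)) * w ^ Suc m) = \<bar>hc (Suc m)\<bar> * norm w * norm w ^ m"
      by (simp add: norm_mult norm_power del: hc.simps)
    also have "\<dots> \<le> \<bar>hc m\<bar> * (\<bar>tt\<bar>^m / (golden * (1 - \<bar>tt\<bar>))) * norm w * norm w ^ m"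
      using hc_bound[of m] by (intro mult_right_mono) auto
    also have "\<dots> = (\<bar>tt\<bar>^m * K) * (\<bar>hc m\<bar> * norm w ^ m)"
      unfolding K_def by simp
    also have "\<dots> \<le> 1/2 * (\<bar>hc m\<bar> * norm w ^ m)"
      using N[OF \<open>m \<ge> N\<close>] by (intro mult_right_mono) auto
    also have "\<dots> = 1/2 * norm (complex_of_real (hc m) * w ^ m)"
      by (simp add: norm_mult norm_power)
    finally show "norm (complex_of_real (hc (Suc m)) * w ^ Suc m) \<le> 1/2 * norm (complex_of_real (hc m) * w ^ m)" .
  qed simp
qed

definition G :: "complex \<Rightarrow> complex" where "G w = (\<Sum>m. complex_of_real (hc m) * w^m)"

lemma G_funeq: "G w = (1 + w / complex_of_real golden) * G (complex_of_real tt * w)"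
proof -
  define A where "A m = complex_of_real (hc m) * (complex_of_real tt * w)^m" for m
  define B where "B m = complex_of_real (hc m * (1 - tt^m)) * w^m" for m
  have sA: "A sums G (complex_of_real tt * w)"
    unfolding A_def G_def using G_summable by (rule summable_sums)
  have "(\<lambda>m. A m * (w / complex_of_real golden)) sums (G (complex_of_real tt * w) * (w / complex_of_real golden))"
    by (rule sums_mult2[OF sA])
  moreover have "(\<lambda>m. A m * (w / complex_of_real golden)) = (\<lambda>m. B (Suc m))"
  proof
    fix m
    have "B (Suc m) = complex_of_real (hc m * tt^m / golden) * w^Suc m"
      unfolding B_def using hc_rec[of m] by simp
    also have "\<dots> = A m * (w / complex_of_real golden)"
      unfolding A_def by (simp add: power_mult_distrib field_simps)
    finally show "A m * (w / complex_of_real golden) = B (Suc m)" by simp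
  qed
  ultimately have "(\<lambda>m. B (Suc m)) sums (G (complex_of_real tt * w) * (w / complex_of_real golden))"
    by simp
  hence sB: "B sums (G (complex_of_real tt * w) * (w / complex_of_real golden))"
    using sums_Suc[of B] by (simp add: B_def)
  have "(\<lambda>m. A m + B m) sums (G (complex_of_real tt * w) + G (complex_of_real tt * w) * (w / complex_of_real golden))"
    by (rule sums_add[OF sA sB])
  moreover have "(\<lambda>m. A m + B m) = (\<lambda>m. complex_of_real (hc m) * w^m)"
    unfolding A_def B_def by (auto simp: power_mult_distrib algebra_simps)
  ultimately have "(\<lambda>m. complex_of_real (hc m) * w^m) sums (G (complex_of_real tt * w) + G (complex_of_real tt * w) * (w / complex_of_real golden))"
    by simp
  hence "G w = G (complex_of_real tt * w) + G (complex_of_real tt * w) * (w / complex_of_real golden)"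
    unfolding G_def by (rule sums_unique2[OF summable_sums[OF G_summable]])
  thus ?thesis by (simp add: algebra_simps)
qed

lemma tt_q: "tt = 1 / (- (golden^2))"
  unfolding tt_def by simp

lemma key: "golden * (- (golden^2) - 1) = sqrt 5 * (- (golden^2))"
proof -
  have "golden * (- (golden^2) - 1) - sqrt 5 * (- (golden^2)) = golden * (golden^2 - golden - 1)"
    unfolding sqrt5_golden by (simp add: algebra_simps power2_eq_square)
  also have "\<dots> = 0" using golden_sq by simp
  finally show ?thesis by simp
qed


lemma ratio_id:
  "tt^m / (golden * (1 - tt^Suc m)) = (1 / sqrt 5) / q_number (- (golden^2)) (Suc m)"
proof -
  define q where "q = - (golden^2)"
  define X where "X = q^m"
  have g: "golden > 1" by (rule golden_pos)
  have q0: "q \<noteq> 0" unfolding q_def using g by simp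
  have X0: "X \<noteq> 0" unfolding X_def using q0 by simp
  have tm: "tt^m = 1 / X" unfolding X_def tt_q q_def[symmetric] by (simp add: power_one_over)
  have tsm: "tt^Suc m = 1 / (q * X)" unfolding X_def tt_q q_def[symmetric] by (simp add: power_one_over)
  have qX: "q * X \<noteq> 1" using tt_pow_ne1[of m] tsm by auto
  have q1: "q - 1 \<noteq> 0" unfolding q_def using g by (smt (verit) zero_le_power2)
  have qn: "q_number q (Suc m) = (q * X - 1) / (q - 1)" unfolding q_number_def X_def by simp
  have key: "golden * (q - 1) = sqrt 5 * q" unfolding q_def by (rule key)
  have s5: "sqrt 5 \<noteq> 0" by simp
  have e1: "tt^m / (golden * (1 - tt^Suc m)) = q / (golden * (q * X - 1))"
    unfolding tm tsm using X0 q0 qX g by (simp add: field_simps)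
  have e2: "q / (golden * (q * X - 1)) = (q - 1) / (sqrt 5 * (q * X - 1))"
  proof -
    have d: "q * X - 1 \<noteq> 0" using qX by simp
    show ?thesis using d g s5 key by (simp add: frac_eq_eq) (metis mult.commute mult.left_commute)
  qed
  have e3: "(q - 1) / (sqrt 5 * (q * X - 1)) = (1 / sqrt 5) / q_number q (Suc m)"
    unfolding qn using q1 qX by (simp add: field_simps)
  show ?thesis unfolding q_def[symmetric] e1 e2 e3 ..
qed

lemma hc_closed: "hc m = (1 / sqrt 5)^m / q_factorial (- (golden^2)) m"
proof (induction m)
  case 0 show ?case by (simp add: q_factorial_def)
next
  case (Suc m)
  have a: "q_factorial (- (golden^2)) (Suc m) = q_factorial (- (golden^2)) m * q_number (- (golden^2)) (Suc m)"
    unfolding q_factorial_def by (simp add: prod.cl_ivl_Suc)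
  have b: "hc (Suc m) = hc m * ((1 / sqrt 5) / q_number (- (golden^2)) (Suc m))"
    unfolding ratio_id[of m, symmetric] hc.simps(2) by (rule times_divide_eq_right[symmetric])
  show ?case unfolding a b Suc by simp
qed

lemma powi_golden: "golden powi (int n - 1 - 2 * int k) = golden^n / golden^(2*k+1)"
proof -
  have h: "int n - 1 - 2 * int k = int n - int (2*k+1)" by simp
  have "golden powi (int n - int (2*k+1)) = golden powi int n / golden powi int (2*k+1)"
    by (rule power_int_diff) (use golden_pos in simp)
  thus ?thesis unfolding h power_int_of_nat .
qed

lemma tt_pow: "tt^k = (-1)^k / golden^(2*k)"
  unfolding tt_def by (metis power_divide power_mult)

lemma term_eq: "(-1)^k * complex_of_real (golden powi (int n - 1 - 2 * int k)) * (y / complex_of_real (golden ^ n))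
   = y * complex_of_real (tt^k / golden)"
proof -
  have r: "(-1)^k * (golden^n / golden^(2*k+1)) / golden^n = tt^k / golden"
    unfolding tt_pow using golden_pos by (simp add: field_simps)
  have "(-1)^k * complex_of_real (golden powi (int n - 1 - 2 * int k)) * (y / complex_of_real (golden ^ n))
     = y * complex_of_real ((-1)^k * (golden^n / golden^(2*k+1)) / golden^n)"
    unfolding powi_golden by simp
  thus ?thesis unfolding r .
qed

definition P :: "nat \<Rightarrow> complex \<Rightarrow> complex" where
  "P n y = (\<Prod>k<n. 1 + y * complex_of_real (tt^k / golden))"

lemma fib_P: "fib_power y n = P n y"
  unfolding fib_power_def P_def term_eq ..

lemma G_iter: "G y = P n y * G (complex_of_real (tt^n) * y)"
proof (induction n)
  case 0 show ?case by (simp add: P_def)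
next
  case (Suc n)
  have "G (complex_of_real (tt^n) * y) = (1 + complex_of_real (tt^n) * y / complex_of_real golden)
     * G (complex_of_real tt * (complex_of_real (tt^n) * y))" by (rule G_funeq)
  also have "complex_of_real (tt^n) * y / complex_of_real golden = y * complex_of_real (tt^n / golden)"
    by simp
  also have "complex_of_real tt * (complex_of_real (tt^n) * y) = complex_of_real (tt^Suc n) * y"
    by simp
  finally show ?case using Suc by (simp add: P_def mult.assoc)
qed

lemma G_cont: "isCont G w"
  unfolding G_def[abs_def] by (rule isCont_powser_converges_everywhere[OF G_summable])

lemma G0: "G 0 = 1"
  unfolding G_def by simp

lemma G_tail: "(\<lambda>n. G (complex_of_real (tt^n) * y)) \<longlonglongrightarrow> 1"
proof -
  have "(\<lambda>n. complex_of_real (tt^n) * y) \<longlonglongrightarrow> complex_of_real 0 * y"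
    using abs_tt(1) by (intro tendsto_intros LIMSEQ_power_zero) simp
  hence "(\<lambda>n. complex_of_real (tt^n) * y) \<longlonglongrightarrow> 0" by simp
  from isCont_tendsto_compose[OF G_cont this] show ?thesis by (simp add: G0)
qed

lemma G_jackson: "G y = jackson_exp (- (golden ^ 2)) (y / complex_of_real (sqrt 5))"
  unfolding G_def jackson_exp_def hc_closed by (simp add: power_divide)

theorem mainTheorem13:
  fixes y :: complex
  shows "(\<lambda>n. fib_power y n) \<longlonglongrightarrow> jackson_exp (- (golden ^ 2)) (y / complex_of_real (sqrt 5))"
proof -
  have "(\<lambda>n. G y / G (complex_of_real (tt^n) * y)) \<longlonglongrightarrow> G y / 1"
    by (intro tendsto_divide tendsto_const G_tail) simp
  moreover have "eventually (\<lambda>n. G (complex_of_real (tt^n) * y) \<noteq> 0) sequentially"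
    using G_tail by (rule tendsto_imp_eventually_ne) simp
  hence "eventually (\<lambda>n. G y / G (complex_of_real (tt^n) * y) = fib_power y n) sequentially"
    by (rule eventually_mono) (metis G_iter fib_P nonzero_mult_div_cancel_right)
  ultimately have "(\<lambda>n. fib_power y n) \<longlonglongrightarrow> G y"
    by (simp add: tendsto_cong)
  thus ?thesis unfolding G_jackson .
qed
end
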